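(* A fragment $F$ in the wait state which has a neighbor fragment $F'$ in the work state may enter the work state only after $F'$ has changed its state to the wait state.
   Context: A broadcast network is modeled as a connected graph G(V,E) with n nodes. In the fragment-level leader election algorithm, nodes are partitioned into fragments each with a candidate; id(F) = (size, candidate identity) ordered lexicographically; an external edge between F1 and F2 with id(F1) > id(F2) is outgoing for F1 and incoming for F2. Initially each node is a size-1 fragment in state wait. A fragment with an outgoing edge is in wait; a fragment in wait whose external edges are all incoming moves to work, where it counts its size new_size and compares with its maximal neighbor F'': if new_size > X · size(F'') (X > 1) it remains active, updates its size, makes all external edges outgoing and returns to wait; otherwise it joins F''. A fragment with no external edges is the leader. It has been shown that a fragment that was in work and remained active re-enters work only after each of its neighboring fragments has been in the work state. *)

theory Defs
  imports Main Complex_Main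
begin

text \<open>A configuration records,
  for every node, the candidate of its fragment (a fragment is identified by
  its candidate), and for every candidate the recorded fragment size and the
  fragment state.\<close>

datatype fstate = Wait | Work

record 'v config =
  cand   :: "'v \<Rightarrow> 'v"
  fsize  :: "'v \<Rightarrow> nat"
  fstate :: "'v \<Rightarrow> fstate"

definition connected_graph :: "'v set \<Rightarrow> ('v \<times> 'v) set \<Rightarrow> bool" where
  "connected_graph V E \<longleftrightarrow> finite V \<and> V \<noteq> {} \<and> E \<subseteq> V \<times> V \<and> sym E \<and> irrefl E
      \<and> (\<forall>u\<in>V. \<forall>v\<in>V. (u, v) \<in> E\<^sup>*)"

definition is_frag :: "'v set \<Rightarrow> 'v config \<Rightarrow> 'v \<Rightarrow> bool" where
  "is_frag V s c \<longleftrightarrow> c \<in> V \<and> cand s c = c"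

definition members :: "'v set \<Rightarrow> 'v config \<Rightarrow> 'v \<Rightarrow> 'v set" where
  "members V s c = {v \<in> V. cand s v = c}"

definition adj_frag :: "'v set \<Rightarrow> ('v \<times> 'v) set \<Rightarrow> 'v config \<Rightarrow> 'v \<Rightarrow> 'v \<Rightarrow> bool" where
  "adj_frag V E s c d \<longleftrightarrow> is_frag V s c \<and> is_frag V s d \<and> c \<noteq> d \<and>
      (\<exists>u v. (u, v) \<in> E \<and> cand s u = c \<and> cand s v = d)"

text \<open>id(F) = (size, candidate), ordered lexicographically; id_less s c d means id(c) < id(d).
  An external edge between c and d is outgoing for c iff id_less s d c, incoming for c iff id_less s c d.\<close>
definition id_less :: "'v::linorder config \<Rightarrow> 'v \<Rightarrow> 'v \<Rightarrow> bool" where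
  "id_less s c d \<longleftrightarrow> fsize s c < fsize s d \<or> (fsize s c = fsize s d \<and> c < d)"

definition initial :: "'v config \<Rightarrow> bool" where
  "initial s \<longleftrightarrow> (\<forall>v. cand s v = v \<and> fsize s v = 1 \<and> fstate s v = Wait)"

inductive step :: "'v set \<Rightarrow> ('v \<times> 'v) set \<Rightarrow> real \<Rightarrow> 'v::linorder config \<Rightarrow> 'v config \<Rightarrow> bool"
  for V E X where
  start_work:
    "\<lbrakk> is_frag V s c; fstate s c = Wait; \<exists>d. adj_frag V E s c d;
       \<forall>d. adj_frag V E s c d \<longrightarrow> id_less s c d \<rbrakk>
     \<Longrightarrow> step V E X s (s\<lparr>fstate := (fstate s)(c := Work)\<rparr>)"
| remain_active:
    "\<lbrakk> is_frag V s c; fstate s c = Work; adj_frag V E s c d;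
       \<forall>e. adj_frag V E s c e \<longrightarrow> e = d \<or> id_less s e d;
       real (card (members V s c)) > X * real (fsize s d) \<rbrakk>
     \<Longrightarrow> step V E X s (s\<lparr>fsize := (fsize s)(c := card (members V s c)),
                          fstate := (fstate s)(c := Wait)\<rparr>)"
| join:
    "\<lbrakk> is_frag V s c; fstate s c = Work; adj_frag V E s c d;
       \<forall>e. adj_frag V E s c e \<longrightarrow> e = d \<or> id_less s e d;
       \<not> (real (card (members V s c)) > X * real (fsize s d)) \<rbrakk>
     \<Longrightarrow> step V E X s (s\<lparr>cand := (\<lambda>v. if cand s v = c then d else cand s v)\<rparr>)"

end

theory Submission
  imports Defs
begin

definition invI :: "'v set \<Rightarrow> ('v \<times> 'v) set \<Rightarrow> 'v::linorder config \<Rightarrow> bool" where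
  "invI V E s \<longleftrightarrow> (\<forall>c d. is_frag V s c \<and> fstate s c = Work \<and> adj_frag V E s c d
      \<longrightarrow> id_less s c d \<and> fstate s d = Wait)"

definition invW :: "'v set \<Rightarrow> 'v config \<Rightarrow> bool" where
  "invW V s \<longleftrightarrow> (\<forall>v\<in>V. cand s v \<in> V \<and> cand s (cand s v) = cand s v)"

lemma adj_sym: "sym E \<Longrightarrow> adj_frag V E s c d \<Longrightarrow> adj_frag V E s d c"
  unfolding adj_frag_def sym_def by blast

lemma id_less_asym: "id_less s c d \<Longrightarrow> \<not> id_less s d c"
  by (auto simp: id_less_def)

lemma invI_step:
  assumes st: "step V E X s s'" and I: "invI V E s" and sy: "sym E"
  shows "invI V E s'"
  using st
proof cases
  case (start_work c0)
  have fr: "is_frag V s' = is_frag V s" using start_work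
    by (auto simp: is_frag_def fun_eq_iff)
  have ad: "adj_frag V E s' = adj_frag V E s" using start_work
    by (auto simp: adj_frag_def is_frag_def fun_eq_iff)
  have il: "id_less s' = id_less s" using start_work
    by (auto simp: id_less_def fun_eq_iff)
  show ?thesis unfolding invI_def fr ad il
  proof (intro allI impI)
    fix c d assume h: "is_frag V s c \<and> fstate s' c = Work \<and> adj_frag V E s c d"
    show "id_less s c d \<and> fstate s' d = Wait"
    proof (cases "c = c0")
      case True
      then have cd: "d \<noteq> c0" using h by (auto simp: adj_frag_def)
      have l: "id_less s c d" using True h start_work by auto
      have "fstate s d = Wait"
      proof (rule ccontr)
        assume "fstate s d \<noteq> Wait"
        then have "fstate s d = Work" by (cases "fstate s d") auto
        moreover have "adj_frag V E s d c" using adj_sym[OF sy] h by blast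
        moreover have "is_frag V s d" using h by (auto simp: adj_frag_def)
        ultimately have "id_less s d c" using I unfolding invI_def by blast
        then show False using l id_less_asym by blast
      qed
      then show ?thesis using l cd start_work by auto
    next
      case False
      then have w: "fstate s c = Work" using h start_work by auto
      then have r: "id_less s c d \<and> fstate s d = Wait" using I h unfolding invI_def by blast
      have "d \<noteq> c0"
      proof
        assume "d = c0"
        then have "id_less s d c" using start_work h adj_sym[OF sy] by blast
        then show False using r id_less_asym by blast
      qed
      then show ?thesis using r start_work by auto
    qed
  qed
next
  case (remain_active c0 d0)
  have fr: "is_frag V s' = is_frag V s" using remain_active
    by (auto simp: is_frag_def fun_eq_iff)
  have ad: "adj_frag V E s' = adj_frag V E s" using remain_active
    by (auto simp: adj_frag_def is_frag_def fun_eq_iff)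
  show ?thesis unfolding invI_def fr ad
  proof (intro allI impI)
    fix c d assume h: "is_frag V s c \<and> fstate s' c = Work \<and> adj_frag V E s c d"
    have c0: "c \<noteq> c0" using h remain_active by auto
    then have w: "fstate s c = Work" using h remain_active by auto
    then have r: "id_less s c d \<and> fstate s d = Wait" using I h unfolding invI_def by blast
    have "d \<noteq> c0" using r remain_active by auto
    then show "id_less s' c d \<and> fstate s' d = Wait" using r c0 remain_active
      by (auto simp: id_less_def)
  qed
next
  case (join c0 d0)
  have d0w: "fstate s d0 = Wait" using I join unfolding invI_def by blast
  have c0d0: "c0 \<noteq> d0" using join by (auto simp: adj_frag_def)
  have d0f: "is_frag V s d0" using join by (auto simp: adj_frag_def)
  have c0f: "cand s c0 = c0" using join by (auto simp: is_frag_def)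
  show ?thesis unfolding invI_def
  proof (intro allI impI)
    fix c d assume h: "is_frag V s' c \<and> fstate s' c = Work \<and> adj_frag V E s' c d"
    have fc: "fstate s c = Work" using h join by auto
    have cnd0: "c \<noteq> d0" using fc d0w by auto
    have cf: "is_frag V s c" "cand s c \<noteq> c0" using h join cnd0
      by (auto simp: is_frag_def split: if_splits)
    have dfr: "is_frag V s' d" using h by (auto simp: adj_frag_def)
    have df: "is_frag V s d" using dfr join d0f c0f
      by (auto simp: is_frag_def split: if_splits)
    obtain u v where uv: "(u, v) \<in> E" "cand s' u = c" "cand s' v = d" "c \<noteq> d"
      using h by (auto simp: adj_frag_def)
    have cu: "cand s u = c" using uv join cnd0 by (auto split: if_splits)
    have "adj_frag V E s c d"
    proof (cases "cand s v = c0")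
      case True
      then have "adj_frag V E s c c0" using uv cu cf join unfolding adj_frag_def by auto
      then have "fstate s c0 = Wait" using I cf fc unfolding invI_def by blast
      then show ?thesis using join by auto
    next
      case False
      then have "cand s v = d" using uv join by auto
      then show ?thesis using uv cu cf df unfolding adj_frag_def by auto
    qed
    then have "id_less s c d \<and> fstate s d = Wait" using I cf fc unfolding invI_def by blast
    then show "id_less s' c d \<and> fstate s' d = Wait" using join by (auto simp: id_less_def)
  qed
qed

lemma invW_step:
  assumes st: "step V E X s s'" and W: "invW V s"
  shows "invW V s'"
  using st
proof cases
  case (join c d)
  then show ?thesis using W unfolding invW_def by (auto simp: adj_frag_def is_frag_def)
qed (use W in \<open>auto simp: invW_def\<close>)

lemma step_cand: "step V E X s s' \<Longrightarrow> \<exists>g. \<forall>v. cand s' v = g (cand s v)"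
proof (induction rule: step.cases)
  case (join s c d)
  then show ?case by (intro exI[of _ "\<lambda>x. if x = c then d else x"]) auto
qed auto

lemma step_wait_cand: "step V E X s s' \<Longrightarrow> fstate s x = Wait \<Longrightarrow> cand s v = x \<Longrightarrow> cand s' v = x"
  by (induction rule: step.cases) auto

lemma step_wait_work: "step V E X s s' \<Longrightarrow> fstate s x = Wait \<Longrightarrow> fstate s' x = Work
   \<Longrightarrow> \<forall>d. adj_frag V E s x d \<longrightarrow> id_less s x d"
proof (induction rule: step.cases)
  case (start_work s c)
  then show ?case by (cases "c = x") auto
next
  case (remain_active s c d)
  then show ?case by (cases "c = x") auto
qed auto

theorem corollary4:
  fixes V :: "'v::linorder set" and E :: "('v \<times> 'v) set" and X :: real
    and run :: "nat \<Rightarrow> 'v config" and F F' :: 'v and i j :: nat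
  assumes graph: "connected_graph V E"
    and X: "X > 1"
    and init: "initial (run 0)"
    and steps: "\<forall>t < j. step V E X (run t) (run (Suc t))"
    and F_wait: "is_frag V (run i) F" "fstate (run i) F = Wait"
    and F'_work: "is_frag V (run i) F'" "fstate (run i) F' = Work"
    and nbr: "adj_frag V E (run i) F F'"
    and ij: "i < j"
    and F_work_later: "is_frag V (run j) F" "fstate (run j) F = Work"
  shows "\<exists>k. i < k \<and> k < j \<and>
           (\<forall>v \<in> members V (run i) F'. fstate (run k) (cand (run k) v) = Wait)"
proof -
  have sy: "sym E" and EV: "E \<subseteq> V \<times> V" using graph by (auto simp: connected_graph_def)
  have invs: "invI V E (run s) \<and> invW V (run s)" if "s \<le> j" for s
    using that
  proof (induction s)
    case 0
    then show ?case using init by (auto simp: invI_def invW_def initial_def)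
  next
    case (Suc s)
    then have st: "step V E X (run s) (run (Suc s))" using steps by auto
    have "invI V E (run s) \<and> invW V (run s)" using Suc by auto
    then show ?case using invI_step[OF st _ sy] invW_step[OF st] by auto
  qed
  define P where "P = (\<lambda>t. i \<le> t \<and> fstate (run (Suc t)) F = Work)"
  have Pex: "P (j - 1)" using ij F_work_later by (auto simp: P_def)
  define t where "t = (LEAST t. P t)"
  have Pt: "P t" unfolding t_def by (rule LeastI[of P, OF Pex])
  have tj: "t < j" using Least_le[of P, OF Pex] ij unfolding t_def[symmetric] by auto
  have it: "i \<le> t" using Pt by (auto simp: P_def)
  have waitF: "fstate (run s) F = Wait" if "i \<le> s" "s \<le> t" for s
  proof (cases "s = i")
    case True then show ?thesis using F_wait by simp
  next
    case False
    define s' where "s' = s - 1"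
    have s': "s = Suc s'" "i \<le> s'" "s' < t" using that False unfolding s'_def by auto
    then have "\<not> P s'" unfolding t_def using not_less_Least by blast
    then have "fstate (run s) F \<noteq> Work" using s' by (auto simp: P_def)
    then show ?thesis by (cases "fstate (run s) F") auto
  qed
  obtain u w where uw: "(u, w) \<in> E" "cand (run i) u = F" "cand (run i) w = F'"
    using nbr by (auto simp: adj_frag_def)
  have wV: "w \<in> V" using uw EV by auto
  have track: "cand (run s) u = F \<and> (\<forall>v \<in> members V (run i) F'. cand (run s) v = cand (run s) w)"
    if "i \<le> s" "s \<le> t" for s
    using that
  proof (induction s rule: dec_induct)
    case base
    then show ?case using uw by (auto simp: members_def)
  next
    case (step n)
    have st: "step V E X (run n) (run (Suc n))" using steps step tj by auto
    have wn: "fstate (run n) F = Wait" using waitF step by auto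
    obtain g where g: "\<forall>v. cand (run (Suc n)) v = g (cand (run n) v)" using step_cand[OF st] by blast
    show ?case using step_wait_cand[OF st wn] step.IH step g by auto
  qed
  have sti: "step V E X (run t) (run (Suc t))" using steps tj by auto
  have wt: "fstate (run t) F = Wait" using waitF it by auto
  have big: "\<forall>d. adj_frag V E (run t) F d \<longrightarrow> id_less (run t) F d"
    using step_wait_work[OF sti wt] Pt by (auto simp: P_def)
  have I: "invI V E (run t)" and W: "invW V (run t)" using invs tj by auto
  have trk: "cand (run t) u = F" "\<forall>v \<in> members V (run i) F'. cand (run t) v = cand (run t) w"
    using track it by auto
  define G where "G = cand (run t) w"
  have Gw: "fstate (run t) G = Wait"
  proof (cases "G = F")
    case True then show ?thesis using wt by simp
  next
    case False
    have uV: "u \<in> V" using uw EV by auto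
    have Fi: "is_frag V (run t) F" using W uV trk unfolding invW_def is_frag_def
      by auto
    have Gf: "is_frag V (run t) G" using W wV unfolding invW_def is_frag_def G_def by auto
    have adj: "adj_frag V E (run t) F G" unfolding adj_frag_def
      using Fi Gf False uw trk G_def by auto
    then have l: "id_less (run t) F G" using big by auto
    show ?thesis
    proof (rule ccontr)
      assume "fstate (run t) G \<noteq> Wait"
      then have "fstate (run t) G = Work" by (cases "fstate (run t) G") auto
      then have "id_less (run t) G F" using I Gf adj_sym[OF sy adj] unfolding invI_def by blast
      then show False using l id_less_asym by blast
    qed
  qed
  have "t \<noteq> i"
  proof
    assume ti: "t = i"
    have "id_less (run i) F F'" using big nbr ti by auto
    moreover have "id_less (run i) F' F"
      using invs[of i] ij F'_work adj_sym[OF sy nbr] unfolding invI_def by auto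
    ultimately show False using id_less_asym by blast
  qed
  then show ?thesis using it tj trk Gw G_def by (intro exI[of _ t]) auto
qed

end
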